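(* Let $A\in\mathbb{R}^{2\times 2}$ and $C\in\mathbb{R}^{1\times 2}$, with $(A,C)$ an observable pair and all eigenvalues of $A$ nonzero. (i) If there is no positive integer $h$ such that $A$ has two distinct eigenvalues $\lambda_1\neq\lambda_2$ with $\lambda_1^h=\lambda_2^h$, then for any two distinct nonnegative integers $t_1,t_2$ the matrix with rows $CA^{t_1},CA^{t_2}$ has rank $2$. (ii) If $A$ has two distinct eigenvalues $\lambda_1\neq\lambda_2$ with $\lambda_1^h=\lambda_2^h$ for some positive integer $h$, let $\bar h$ be the smallest such positive integer. Then for any $t\in\{0,1,2,\ldots\}$, any positive integer $T$, and any set of $N_s$ distinct integers $t_1,\ldots,t_{N_s}$ in $[t,t+T-1]$ with $N_s\geq 1+T/\bar h$, the matrix with rows $CA^{t_1},\ldots,CA^{t_{N_s}}$ has rank $2$.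
   Context: Setting: discrete-time single-output system $x(t+1)=Ax(t)+Bu(t)$, $y(t)=Cx(t)+Du(t)$ with output measured at selected time instances; the matrix with rows $CA^{t_i}$ is the sample-based observability matrix and rank $n$ means sample-based observability. $(A,C)$ observable means the matrix with rows $C,CA$ has rank $2$. *)

theory Defs
  imports "HOL-Analysis.Analysis"
begin

primrec matpow :: "'a::semiring_1^'n^'n \<Rightarrow> nat \<Rightarrow> 'a^'n^'n" where
  "matpow A 0 = mat 1"
| "matpow A (Suc k) = matpow A k ** A"

definition cmat :: "real^'n^'m \<Rightarrow> complex^'n^'m" where
  "cmat A = (\<chi> i j. complex_of_real (A $ i $ j))"

definition is_eigenvalue :: "real^'n^'n \<Rightarrow> complex \<Rightarrow> bool" where
  "is_eigenvalue A l \<longleftrightarrow> (\<exists>v::complex^'n. v \<noteq> 0 \<and> cmat A *v v = l *s v)"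

definition observable2 :: "real^2^2 \<Rightarrow> real^2 \<Rightarrow> bool" where
  "observable2 A C \<longleftrightarrow> rank (\<chi> i::2. if i = 1 then C else C v* A) = 2"

text \<open>Rank of the sample-based observability matrix with rows C A^t, t \<in> S
  (row rank = dimension of the span of the rows).\<close>
definition sample_obs_rank :: "real^'n^'n \<Rightarrow> real^'n \<Rightarrow> nat set \<Rightarrow> nat" where
  "sample_obs_rank A C S = dim (span ((\<lambda>t. C v* matpow A t) ` S))"

end

theory Submission
  imports Defs
begin

lemma det_rows: "det (\<chi> i::2. if i = 1 then (x::real^2) else y) = x$1 * y$2 - x$2 * y$1"
  by (simp add: det_2)

lemma rank2_iff: "rank (M::real^2^2) = 2 \<longleftrightarrow> det M \<noteq> 0"
  using det_eq_0_rank[of M] rank_bound[of M] by auto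

lemma rows_mult: "(\<chi> i::2. if i = 1 then (x::real^2) v* M else y v* M) = (\<chi> i::2. if i = 1 then x else y) ** M"
  by (simp add: vec_eq_iff forall_2 matrix_matrix_mult_def vector_matrix_mult_def)

lemma det_rows_mult: "det (\<chi> i::2. if i = 1 then (x::real^2) v* M else y v* M) = det (\<chi> i::2. if i = 1 then x else y) * det M"
  by (simp add: rows_mult det_mul)

lemma matpow_add: "matpow A (m + n) = matpow A m ** matpow A n"
  by (induction n) (simp_all add: matrix_mul_assoc)

lemma det_matpow: "det (matpow (A::real^'n^'n) n) = det A ^ n"
  by (induction n) (simp_all add: det_mul)

lemma vm_lid: "(x::real^2) v* mat 1 = x"
  by (simp add: vec_eq_iff forall_2 vector_matrix_mult_def sum_2 mat_def)

lemma CH2: "(A::real^2^2) ** A = (A$1$1 + A$2$2) *\<^sub>R A - det A *\<^sub>R mat 1"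
  by (simp add: vec_eq_iff forall_2 matrix_matrix_mult_def sum_2 mat_def det_2 algebra_simps)

lemma vm_lin: "(a *\<^sub>R (u::real^2) - b *\<^sub>R v) v* M = a *\<^sub>R (u v* M) - b *\<^sub>R (v v* M)"
  by (simp add: vec_eq_iff forall_2 vector_matrix_mult_def sum_2 algebra_simps)

lemma vm_lin2: "(u::real^2) v* (a *\<^sub>R M - b *\<^sub>R mat 1) = a *\<^sub>R (u v* M) - b *\<^sub>R u"
  by (simp add: vec_eq_iff forall_2 vector_matrix_mult_def sum_2 mat_def algebra_simps)

fun ff :: "real \<Rightarrow> real \<Rightarrow> nat \<Rightarrow> real" where
  "ff tau de 0 = 0"
| "ff tau de (Suc 0) = 1"
| "ff tau de (Suc (Suc n)) = tau * ff tau de (Suc n) - de * ff tau de n"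

lemma rowpow: "(C::real^2) v* matpow A (Suc n) =
   ff (A$1$1 + A$2$2) (det A) (Suc n) *\<^sub>R (C v* A) - (det A * ff (A$1$1 + A$2$2) (det A) n) *\<^sub>R C"
proof (induction n)
  case 0
  then show ?case by (simp add: vm_lid)
next
  case (Suc n)
  have "C v* matpow A (Suc (Suc n)) = (C v* matpow A (Suc n)) v* A"
    by (subst matpow.simps(2)) (rule vector_matrix_mul_assoc[symmetric])
  also have "\<dots> = ff (A$1$1 + A$2$2) (det A) (Suc n) *\<^sub>R ((C v* A) v* A) - (det A * ff (A$1$1 + A$2$2) (det A) n) *\<^sub>R (C v* A)"
    by (simp only: Suc.IH vm_lin)
  also have "(C v* A) v* A = (A$1$1 + A$2$2) *\<^sub>R (C v* A) - det A *\<^sub>R C"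
    by (simp add: vector_matrix_mul_assoc CH2 vm_lin2)
  finally show ?case by (simp add: algebra_simps)
qed

lemma det_C_pow: "det (\<chi> i::2. if i = 1 then (C::real^2) else C v* matpow A d)
   = ff (A$1$1 + A$2$2) (det A) d * det (\<chi> i::2. if i = 1 then C else C v* A)"
proof (cases d)
  case 0 then show ?thesis by (simp add: det_rows vm_lid)
next
  case (Suc n) then show ?thesis by (simp only: rowpow) (simp add: det_rows algebra_simps)
qed

lemma det_pow_C: "det (\<chi> i::2. if i = 1 then C v* matpow A d else (C::real^2))
   = - ff (A$1$1 + A$2$2) (det A) d * det (\<chi> i::2. if i = 1 then C else C v* A)"
proof (cases d)
  case 0 then show ?thesis by (simp add: det_rows vm_lid)
next
  case (Suc n) then show ?thesis by (simp only: rowpow) (simp add: det_rows algebra_simps)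
qed

lemma det_pair:
  assumes "t1 \<le> t2"
  shows "det (\<chi> i::2. if i = 1 then (C::real^2) v* matpow A t1 else C v* matpow A t2)
    = ff (A$1$1 + A$2$2) (det A) (t2 - t1) * det (\<chi> i::2. if i = 1 then C else C v* A) * det A ^ t1"
proof -
  have e: "t2 = (t2 - t1) + t1" using assms by simp
  have "C v* matpow A t2 = (C v* matpow A (t2 - t1)) v* matpow A t1"
    by (subst e) (simp add: matpow_add vector_matrix_mul_assoc)
  moreover have "C v* matpow A t1 = (C v* mat 1) v* matpow A t1" by (simp add: vm_lid)
  ultimately show ?thesis
    by (simp only: det_rows_mult det_matpow) (simp only: vm_lid det_C_pow)
qed

lemma det_pair2:
  assumes "t2 \<le> t1"
  shows "det (\<chi> i::2. if i = 1 then (C::real^2) v* matpow A t1 else C v* matpow A t2)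
    = - ff (A$1$1 + A$2$2) (det A) (t1 - t2) * det (\<chi> i::2. if i = 1 then C else C v* A) * det A ^ t2"
proof -
  have e: "t1 = (t1 - t2) + t2" using assms by simp
  have "C v* matpow A t1 = (C v* matpow A (t1 - t2)) v* matpow A t2"
    by (subst e) (simp add: matpow_add vector_matrix_mul_assoc)
  moreover have "C v* matpow A t2 = (C v* mat 1) v* matpow A t2" by (simp add: vm_lid)
  ultimately show ?thesis
    by (simp only: det_rows_mult det_matpow) (simp only: vm_lid det_pow_C)
qed

lemma eig_iff:
  fixes A :: "real^2^2"
  shows "is_eigenvalue A l \<longleftrightarrow>
    (complex_of_real (A$1$1) - l) * (complex_of_real (A$2$2) - l) - complex_of_real (A$1$2) * complex_of_real (A$2$1) = 0"
    (is "_ \<longleftrightarrow> (?a - l) * (?d - l) - ?b * ?c = 0")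
proof
  assume "is_eigenvalue A l"
  then obtain v :: "complex^2" where v: "v \<noteq> 0" "cmat A *v v = l *s v"
    unfolding is_eigenvalue_def by blast
  have e1: "(?a - l) * v$1 + ?b * v$2 = 0" and e2: "?c * v$1 + (?d - l) * v$2 = 0"
    using v(2) by (simp_all add: vec_eq_iff forall_2 matrix_vector_mult_def sum_2 cmat_def algebra_simps)
  have "((?a - l) * (?d - l) - ?b * ?c) * v$1 = (?d - l) * ((?a - l) * v$1 + ?b * v$2) - ?b * (?c * v$1 + (?d - l) * v$2)"
    by (simp add: algebra_simps)
  hence h1: "((?a - l) * (?d - l) - ?b * ?c) * v$1 = 0" using e1 e2 by simp
  have "((?a - l) * (?d - l) - ?b * ?c) * v$2 = (?a - l) * (?c * v$1 + (?d - l) * v$2) - ?c * ((?a - l) * v$1 + ?b * v$2)"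
    by (simp add: algebra_simps)
  hence h2: "((?a - l) * (?d - l) - ?b * ?c) * v$2 = 0" using e1 e2 by simp
  have "v$1 \<noteq> 0 \<or> v$2 \<noteq> 0" using v(1) by (auto simp: vec_eq_iff forall_2)
  then show "(?a - l) * (?d - l) - ?b * ?c = 0" using h1 h2 by auto
next
  assume ch: "(?a - l) * (?d - l) - ?b * ?c = 0"
  have ex: "\<exists>x y. (x \<noteq> 0 \<or> y \<noteq> 0) \<and> (?a - l) * x + ?b * y = 0 \<and> ?c * x + (?d - l) * y = 0"
  proof (cases "?b = 0")
    case False
    then show ?thesis using ch by (intro exI[of _ ?b] exI[of _ "l - ?a"]) (auto simp: algebra_simps)
  next
    case True
    show ?thesis
    proof (cases "l - ?d = 0 \<and> ?c = 0")
      case True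
      then show ?thesis using \<open>?b = 0\<close> by (intro exI[of _ 0] exI[of _ 1]) auto
    next
      case False
      then show ?thesis using ch \<open>?b = 0\<close> by (intro exI[of _ "l - ?d"] exI[of _ ?c]) (auto simp: algebra_simps)
    qed
  qed
  then obtain x y where xy: "x \<noteq> 0 \<or> y \<noteq> 0" "(?a - l) * x + ?b * y = 0" "?c * x + (?d - l) * y = 0" by blast
  define v :: "complex^2" where "v = (\<chi> i. if i = 1 then x else y)"
  have "v \<noteq> 0" using xy(1) by (auto simp: v_def vec_eq_iff forall_2)
  moreover have "cmat A *v v = l *s v"
    using xy(2,3) by (simp add: v_def vec_eq_iff forall_2 matrix_vector_mult_def sum_2 cmat_def algebra_simps)
  ultimately show "is_eigenvalue A l" unfolding is_eigenvalue_def by blast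
qed

lemma ff_diff:
  assumes "complex_of_real tau = u + v" "complex_of_real de = u * v"
  shows "complex_of_real (ff tau de n) * (u - v) = u ^ n - v ^ n"
proof -
  have "complex_of_real (ff tau de n) * (u - v) = u ^ n - v ^ n \<and>
        complex_of_real (ff tau de (Suc n)) * (u - v) = u ^ Suc n - v ^ Suc n"
  proof (induction n)
    case 0 then show ?case by simp
  next
    case (Suc n)
    have "complex_of_real (ff tau de (Suc (Suc n))) * (u - v) =
       complex_of_real tau * (complex_of_real (ff tau de (Suc n)) * (u - v)) - complex_of_real de * (complex_of_real (ff tau de n) * (u - v))"
      by (simp add: algebra_simps)
    also have "\<dots> = (u + v) * (u ^ Suc n - v ^ Suc n) - (u * v) * (u ^ n - v ^ n)"
      using Suc assms by simp
    also have "\<dots> = u ^ Suc (Suc n) - v ^ Suc (Suc n)"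
      by (simp add: algebra_simps)
    finally show ?case using Suc by simp
  qed
  then show ?thesis by simp
qed

lemma ff_eq:
  assumes "complex_of_real tau = u + u" "complex_of_real de = u * u"
  shows "complex_of_real (ff tau de n) * u = of_nat n * u ^ n"
proof -
  have "complex_of_real (ff tau de n) * u = of_nat n * u ^ n \<and>
        complex_of_real (ff tau de (Suc n)) * u = of_nat (Suc n) * u ^ Suc n"
  proof (induction n)
    case 0 then show ?case by simp
  next
    case (Suc n)
    have "complex_of_real (ff tau de (Suc (Suc n))) * u =
       complex_of_real tau * (complex_of_real (ff tau de (Suc n)) * u) - complex_of_real de * (complex_of_real (ff tau de n) * u)"
      by (simp add: algebra_simps)
    also have "\<dots> = (u + u) * (of_nat (Suc n) * u ^ Suc n) - (u * u) * (of_nat n * u ^ n)"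
      using Suc assms by simp
    also have "\<dots> = of_nat (Suc (Suc n)) * u ^ Suc (Suc n)"
      by (simp add: algebra_simps)
    finally show ?case using Suc by simp
  qed
  then show ?thesis by simp
qed


lemma charpoly_factor:
  fixes A :: "real^2^2"
  defines "tr \<equiv> A$1$1 + A$2$2"
  defines "sq \<equiv> csqrt (complex_of_real (tr^2 - 4 * det A))"
  shows "(complex_of_real (A$1$1) - l) * (complex_of_real (A$2$2) - l) - complex_of_real (A$1$2) * complex_of_real (A$2$1)
     = (l - (complex_of_real tr + sq) / 2) * (l - (complex_of_real tr - sq) / 2)"
proof -
  have s2: "sq * sq = complex_of_real (tr^2 - 4 * det A)"
    unfolding sq_def by (metis power2_csqrt power2_eq_square)
  have "(l - (complex_of_real tr + sq) / 2) * (l - (complex_of_real tr - sq) / 2)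
      = l * l - l * complex_of_real tr + (complex_of_real tr * complex_of_real tr - sq * sq) / 4"
    by (simp add: field_simps)
  also have "\<dots> = l * l - l * complex_of_real tr + complex_of_real (det A)"
    by (simp add: s2 power2_eq_square)
  finally show ?thesis by (simp add: det_2 tr_def algebra_simps)
qed

lemma indep2:
  assumes "det (\<chi> i::2. if i = 1 then (x::real^2) else y) \<noteq> 0"
  shows "x \<noteq> y \<and> independent {x, y}"
proof -
  have y0: "y \<noteq> 0" using assms by (auto simp: det_rows)
  have xy: "x \<noteq> y" using assms by (auto simp: det_rows)
  have "x \<notin> span {y}"
  proof
    assume "x \<in> span {y}"
    then obtain k where "x = k *\<^sub>R y" by (auto simp: span_singleton)
    then show False using assms by (simp add: det_rows)
  qed
  moreover have "independent {y}" using y0 by (simp add: independent_insert)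
  ultimately show ?thesis using xy by (simp add: independent_insert)
qed

theorem lemma3:
  fixes A :: "real^2^2" and C :: "real^2"
  assumes obs: "observable2 A C"
    and nz: "\<And>l. is_eigenvalue A l \<Longrightarrow> l \<noteq> 0"
  shows
   "(\<not> (\<exists>h::nat. h > 0 \<and> (\<exists>l1 l2. is_eigenvalue A l1 \<and> is_eigenvalue A l2 \<and> l1 \<noteq> l2 \<and> l1 ^ h = l2 ^ h))
      \<longrightarrow> (\<forall>t1 t2::nat. t1 \<noteq> t2 \<longrightarrow>
             rank (\<chi> i::2. if i = 1 then C v* matpow A t1 else C v* matpow A t2) = 2))
    \<and>
    ((\<exists>h::nat. h > 0 \<and> (\<exists>l1 l2. is_eigenvalue A l1 \<and> is_eigenvalue A l2 \<and> l1 \<noteq> l2 \<and> l1 ^ h = l2 ^ h))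
      \<longrightarrow> (let hbar = (LEAST h::nat. h > 0 \<and> (\<exists>l1 l2. is_eigenvalue A l1 \<and> is_eigenvalue A l2 \<and> l1 \<noteq> l2 \<and> l1 ^ h = l2 ^ h))
           in \<forall>(t::nat) (T::nat) (S::nat set). T > 0 \<longrightarrow> S \<subseteq> {t..t+T-1} \<longrightarrow>
                 real (card S) \<ge> 1 + real T / real hbar \<longrightarrow> sample_obs_rank A C S = 2))"
  proof -
  define tr where "tr = A$1$1 + A$2$2"
  define de where "de = det A"
  define F where "F = ff tr de"
  define sq where "sq = csqrt (complex_of_real (tr^2 - 4 * det A))"
  define z1 where "z1 = (complex_of_real tr + sq) / 2"
  define z2 where "z2 = (complex_of_real tr - sq) / 2"
  define R0 where "R0 = det (\<chi> i::2. if i = 1 then C else C v* A)"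
  have eig: "\<And>l. is_eigenvalue A l \<longleftrightarrow> l = z1 \<or> l = z2"
    unfolding eig_iff charpoly_factor z1_def z2_def sq_def tr_def by simp
  have z1nz: "z1 \<noteq> 0" and z2nz: "z2 \<noteq> 0" using nz eig by auto
  have sum_z: "complex_of_real tr = z1 + z2" by (simp add: z1_def z2_def field_simps)
  have s2: "sq * sq = complex_of_real (tr^2 - 4 * det A)"
    unfolding sq_def by (metis power2_csqrt power2_eq_square)
  have prod_z: "complex_of_real de = z1 * z2"
  proof -
    have "z1 * z2 = (complex_of_real tr * complex_of_real tr - sq * sq) / 4"
      by (simp add: z1_def z2_def field_simps)
    also have "\<dots> = complex_of_real de" by (simp add: s2 de_def power2_eq_square)
    finally show ?thesis by simp
  qed
  have de0: "de \<noteq> 0"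
  proof
    assume "de = 0"
    then have "z1 * z2 = 0" using prod_z by simp
    then show False using z1nz z2nz by simp
  qed
  have R0: "R0 \<noteq> 0" using obs unfolding observable2_def R0_def rank2_iff .
  have Fdiff: "\<And>n. complex_of_real (F n) * (z1 - z2) = z1 ^ n - z2 ^ n"
    unfolding F_def by (rule ff_diff[OF sum_z prod_z])
  define Q where "Q = (\<lambda>h::nat. h > 0 \<and> (\<exists>l1 l2. is_eigenvalue A l1 \<and> is_eigenvalue A l2 \<and> l1 \<noteq> l2 \<and> l1 ^ h = l2 ^ h))"
  have Q1: "\<And>h. Q h \<longleftrightarrow> h > 0 \<and> z1 \<noteq> z2 \<and> z1 ^ h = z2 ^ h"
    unfolding Q_def eig by auto
  have Q2: "\<And>h. Q h \<longleftrightarrow> h > 0 \<and> F h = 0"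
  proof -
    fix h :: nat
    show "Q h \<longleftrightarrow> h > 0 \<and> F h = 0"
    proof
      assume "Q h"
      then have "h > 0" "z1 \<noteq> z2" "z1 ^ h = z2 ^ h" using Q1 by auto
      then show "h > 0 \<and> F h = 0" using Fdiff[of h] by simp
    next
      assume h: "h > 0 \<and> F h = 0"
      have "z1 \<noteq> z2"
      proof
        assume e: "z1 = z2"
        have "complex_of_real (F h) * z1 = of_nat h * z1 ^ h"
          unfolding F_def using ff_eq[of tr z1 de h] sum_z prod_z e by simp
        then show False using h z1nz by simp
      qed
      moreover have "z1 ^ h = z2 ^ h" using Fdiff[of h] h by simp
      ultimately show "Q h" using Q1 h by auto
    qed
  qed
  have rk_lt: "\<And>t1 t2. t1 < t2 \<Longrightarrow>
      det (\<chi> i::2. if i = 1 then C v* matpow A t1 else C v* matpow A t2) \<noteq> 0 \<longleftrightarrow> F (t2 - t1) \<noteq> 0"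
    using det_pair R0 de0 unfolding R0_def F_def tr_def de_def by simp
  have rk_gt: "\<And>t1 t2. t2 < t1 \<Longrightarrow>
      det (\<chi> i::2. if i = 1 then C v* matpow A t1 else C v* matpow A t2) \<noteq> 0 \<longleftrightarrow> F (t1 - t2) \<noteq> 0"
    using det_pair2 R0 de0 unfolding R0_def F_def tr_def de_def by simp
  have part1: "(\<not> (\<exists>h. Q h)) \<longrightarrow> (\<forall>t1 t2::nat. t1 \<noteq> t2 \<longrightarrow>
             rank (\<chi> i::2. if i = 1 then C v* matpow A t1 else C v* matpow A t2) = 2)"
  proof (intro impI allI)
    fix t1 t2 :: nat
    assume nQ: "\<not> (\<exists>h. Q h)" and ne: "t1 \<noteq> t2"
    show "rank (\<chi> i::2. if i = 1 then C v* matpow A t1 else C v* matpow A t2) = 2"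
    proof (cases "t1 < t2")
      case True
      then show ?thesis using True rk_lt[OF True] nQ Q2[of "t2 - t1"] rank2_iff by auto
    next
      case False
      then have lt: "t2 < t1" using ne by simp
      show ?thesis using lt rk_gt[OF lt] nQ Q2[of "t1 - t2"] rank2_iff by auto
    qed
  qed
  have part2: "(\<exists>h. Q h) \<longrightarrow> (let hbar = (LEAST h::nat. Q h)
           in \<forall>(t::nat) (T::nat) (S::nat set). T > 0 \<longrightarrow> S \<subseteq> {t..t+T-1} \<longrightarrow>
                 real (card S) \<ge> 1 + real T / real hbar \<longrightarrow> sample_obs_rank A C S = 2)"
  proof (intro impI)
    assume exQ: "\<exists>h. Q h"
    define h where "h = (LEAST h::nat. Q h)"
    have Qh: "Q h" unfolding h_def using exQ by (metis LeastI)
    then have hpos: "h > 0" and z12: "z1 \<noteq> z2" and zh: "z1 ^ h = z2 ^ h" using Q1 by auto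
    have hdvd: "\<And>d. d > 0 \<Longrightarrow> F d = 0 \<Longrightarrow> h dvd d"
    proof -
      fix d :: nat assume d: "d > 0" "F d = 0"
      then have "z1 ^ d = z2 ^ d" using Q1 Q2 by auto
      define q r where "q = d div h" and "r = d mod h"
      have dd: "d = r + h * q" unfolding q_def r_def by simp
      have "z1 ^ r * (z1 ^ h) ^ q = z2 ^ r * (z1 ^ h) ^ q"
        using \<open>z1 ^ d = z2 ^ d\<close> zh unfolding dd by (simp add: power_add power_mult)
      moreover have "(z1 ^ h) ^ q \<noteq> 0" using z1nz by simp
      ultimately have zr: "z1 ^ r = z2 ^ r" using z1nz by auto
      have "r < h" unfolding r_def using hpos by simp
      have "r = 0"
      proof (rule ccontr)
        assume "r \<noteq> 0"
        then have "Q r" using Q1 zr z12 by auto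
        then have "h \<le> r" unfolding h_def by (rule Least_le)
        then show False using \<open>r < h\<close> by simp
      qed
      then show "h dvd d" unfolding r_def by auto
    qed
    show "let hbar = (LEAST h::nat. Q h)
           in \<forall>(t::nat) (T::nat) (S::nat set). T > 0 \<longrightarrow> S \<subseteq> {t..t+T-1} \<longrightarrow>
                 real (card S) \<ge> 1 + real T / real hbar \<longrightarrow> sample_obs_rank A C S = 2"
      unfolding h_def[symmetric] Let_def
    proof (intro allI impI)
      fix t T :: nat and S :: "nat set"
      assume Tpos: "T > 0" and Ssub: "S \<subseteq> {t..t+T-1}" and cardS: "real (card S) \<ge> 1 + real T / real h"
      have "real T / real h > 0" using Tpos hpos by simp
      then have c2: "card S \<ge> 2" using cardS by linarith
      have finS: "finite S" using c2 card.infinite by force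
      have neS: "S \<noteq> {}" using c2 by auto
      have "\<exists>t1\<in>S. \<exists>t2\<in>S. t1 < t2 \<and> F (t2 - t1) \<noteq> 0"
      proof (rule ccontr)
        assume nex: "\<not> (\<exists>t1\<in>S. \<exists>t2\<in>S. t1 < t2 \<and> F (t2 - t1) \<noteq> 0)"
        define m where "m = Min S"
        have mS: "m \<in> S" unfolding m_def using finS neS by simp
        have mle: "\<And>s. s \<in> S \<Longrightarrow> m \<le> s" unfolding m_def using finS by simp
        have tm: "t \<le> m" using mS Ssub by auto
        define K where "K = (t + T - 1 - m) div h"
        have "S \<subseteq> (\<lambda>k. m + h * k) ` {0..K}"
        proof
          fix s assume sS: "s \<in> S"
          have "h dvd (s - m)"
          proof (cases "s = m")
            case True then show ?thesis by simp
          next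
            case False
            then have "m < s" using mle[OF sS] by simp
            then have "F (s - m) = 0" using nex mS sS by auto
            then show ?thesis using hdvd \<open>m < s\<close> by simp
          qed
          then obtain k where k: "s - m = h * k" by blast
          have "s \<le> t + T - 1" using sS Ssub by auto
          then have "h * k \<le> t + T - 1 - m" using k by simp
          then have "(h * k) div h \<le> (t + T - 1 - m) div h" by (rule div_le_mono)
          then have "k \<le> K" unfolding K_def using hpos by simp
          moreover have "s = m + h * k" using k mle[OF sS] by simp
          ultimately show "s \<in> (\<lambda>k. m + h * k) ` {0..K}" by auto
        qed
        then have "card S \<le> card ((\<lambda>k. m + h * k) ` {0..K})" by (simp add: card_mono)
        also have "\<dots> \<le> K + 1" using card_image_le[of "{0..K}" "\<lambda>k. m + h * k"] by simp
        finally have cS: "card S \<le> K + 1" .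
        have "K \<le> (T - 1) div h" unfolding K_def using tm by (intro div_le_mono) simp
        then have "h * K \<le> h * ((T - 1) div h)" by (rule mult_le_mono2)
        also have "\<dots> \<le> T - 1" using div_times_less_eq_dividend[of "T - 1" h] by (simp add: mult.commute)
        finally have hK: "h * K \<le> T - 1" .
        have "real (h * K) \<le> real (T - 1)" using hK by (simp only: of_nat_le_iff)
        then have "real h * real K \<le> real T - 1" using Tpos by (simp add: of_nat_diff)
        then have "real K < real T / real h" using hpos by (simp add: field_simps)
        then have "real (card S) < 1 + real T / real h" using cS by linarith
        then show False using cardS by simp
      qed
      then obtain t1 t2 where t12: "t1 \<in> S" "t2 \<in> S" "t1 < t2" "F (t2 - t1) \<noteq> 0" by blast
      define x where "x = C v* matpow A t1"
      define y where "y = C v* matpow A t2"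
      have "det (\<chi> i::2. if i = 1 then x else y) \<noteq> 0" unfolding x_def y_def using rk_lt[OF t12(3)] t12(4) by simp
      then have ind: "x \<noteq> y" "independent {x, y}" using indep2 by auto
      have sub: "{x, y} \<subseteq> (\<lambda>t. C v* matpow A t) ` S" using t12 unfolding x_def y_def by auto
      have "2 \<le> dim ((\<lambda>t. C v* matpow A t) ` S)"
        using independent_card_le_dim[OF sub ind(2)] ind(1) by simp
      moreover have "dim ((\<lambda>t. C v* matpow A t) ` S) \<le> 2"
        using dim_subset_UNIV_cart[of "(\<lambda>t. C v* matpow A t) ` S"] by simp
      ultimately show "sample_obs_rank A C S = 2" unfolding sample_obs_rank_def by simp
    qed
  qed
  show ?thesis using part1 part2 unfolding Q_def by blast
qed

end
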